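(* Let $C(z)\in 1+z^2\mathbb Z[z^2]$ and suppose $C(z)=\phi(z)\phi(-z)$ for some polynomial $\phi(z)\in\mathbb Z[z]$. Then $C(z)\,C(iz)\,C(z^2)$ is the square of a formal power series with integer coefficients. Consequently, for every strongly amphicheiral knot $K$ with Conway polynomial $C(z)$, there is $F\in\mathbb Z_4[z^2]$ with $F^2=C(z)\,C(z^2)\,C(iz)$ in $\mathbb Z_4[z^2]$.
   Context: A knot $K\subset S^3$ is strongly (positive or negative) amphicheiral if there is an orientation-reversing involution of $S^3$ mapping $K$ to itself setwise (whose restriction to $K$ preserves, respectively reverses, the string orientation). The Conway polynomial $C(z)$ of a knot lies in $1+z^2\mathbb Z[z^2]$, and $C(z)C(z^2)C(iz)\in\mathbb Z[z^2]$ is reduced modulo $4$. *)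

theory Defs
  imports Complex_Main "HOL-Computational_Algebra.Computational_Algebra"
begin

definition conway_triple :: "int poly \<Rightarrow> complex poly" where
  "conway_triple C =
     map_poly of_int C
     * pcompose (map_poly of_int C) [:0, \<i>:]
     * pcompose (map_poly of_int C) [:0, 0, 1:]"

end

theory Submission imports Defs begin

function tt :: "int fps \<Rightarrow> int fps \<Rightarrow> nat \<Rightarrow> int" where
  "tt X Y n = (if n = 0 then 0 else Y $ n - (\<Sum>i\<in>{1..n}. X $ i * tt X Y (n - i))
      - (\<Sum>i\<in>{1..<n}. tt X Y i * tt X Y (n - i)))"
  by auto
termination by (relation "measure (\<lambda>(X,Y,n). n)") auto

declare tt.simps[simp del]

lemma sqrt_aux:
  fixes X Y :: "int fps"
  assumes "X $ 0 = 1" "Y $ 0 = 0"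
  shows "\<exists>t. X * t + t * t = Y"
proof
  let ?t = "Abs_fps (tt X Y)"
  show "X * ?t + ?t * ?t = Y"
  proof (rule fps_ext)
    fix n
    show "(X * ?t + ?t * ?t) $ n = Y $ n"
    proof (cases "n = 0")
      case True
      then show ?thesis using assms by (simp add: tt.simps)
    next
      case False
      have t0: "tt X Y 0 = 0" by (simp add: tt.simps)
      have s1: "(\<Sum>i=0..n. X $ i * tt X Y (n - i)) = tt X Y n + (\<Sum>i\<in>{1..n}. X $ i * tt X Y (n - i))"
        using assms by (simp add: sum.atLeast_Suc_atMost)
      have s2: "(\<Sum>i=0..n. tt X Y i * tt X Y (n - i)) = (\<Sum>i\<in>{1..<n}. tt X Y i * tt X Y (n - i))"
      proof -
        have "(\<Sum>i=0..n. tt X Y i * tt X Y (n - i)) = (\<Sum>i\<in>{1..n}. tt X Y i * tt X Y (n - i))"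
          using t0 by (simp add: sum.atLeast_Suc_atMost)
        also have "\<dots> = (\<Sum>i\<in>{1..<n}. tt X Y i * tt X Y (n - i))"
        proof -
          have "{1..n} = insert n {1..<n}" using False by auto
          then show ?thesis using t0 by simp
        qed
        finally show ?thesis .
      qed
      have "(X * ?t + ?t * ?t) $ n = tt X Y n + (\<Sum>i\<in>{1..n}. X $ i * tt X Y (n - i)) + (\<Sum>i\<in>{1..<n}. tt X Y i * tt X Y (n - i))"
        by (simp add: fps_mult_nth s1 s2)
      also have "\<dots> = Y $ n" using False by (subst (1) tt.simps) simp
      finally show ?thesis .
    qed
  qed
qed


lemma coeff_comp_sq:
  "coeff (pcompose p [:0,0,1:]) n = (if even n then coeff p (n div 2) else (0::'a::comm_ring_1))"
proof (induction p arbitrary: n)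
  case 0 then show ?case by simp
next
  case (pCons a p)
  have e: "pcompose (pCons a p) [:0,0,1:] = pCons a (pCons 0 (pcompose p [:0,0,1:]))"
    by (simp add: pcompose_pCons)
  show ?case
  proof (cases n)
    case 0 then show ?thesis by (simp add: e)
  next
    case (Suc m) note m = this
    show ?thesis
    proof (cases m)
      case 0 then show ?thesis using m by (simp add: e)
    next
      case (Suc k)
      then show ?thesis using m pCons.IH[of k] by (simp add: e)
    qed
  qed
qed

lemma dvd2_sq: "[:2:] dvd (f * f - pcompose f [:0,0,1:])" for f :: "int poly"
proof (induction f)
  case 0 then show ?case by simp
next
  case (pCons a q)
  define A where "A = [:a:]"
  define Xp where "Xp = ([:0,1:] :: int poly)"
  define qq where "qq = pcompose q [:0,0,1:]"
  have f: "pCons a q = A + Xp * q" by (simp add: A_def Xp_def)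
  have XX: "Xp * Xp = [:0,0,1:]" by (simp add: Xp_def)
  have c: "pcompose (pCons a q) [:0,0,1:] = A + Xp * Xp * qq"
    by (simp add: pcompose_pCons A_def qq_def XX)
  have id: "pCons a q * pCons a q - pcompose (pCons a q) [:0,0,1:]
        = (A * A - A) + [:2:] * (A * Xp * q) + Xp * Xp * (q * q - qq)"
    unfolding c unfolding f by (simp add: algebra_simps numeral_mult_conv_smult[symmetric])
  have d1: "[:2:] dvd A * A - A"
    by (simp add: A_def)
  have d3: "[:2:] dvd Xp * Xp * (q * q - qq)" using pCons.IH qq_def by simp
  have d2: "[:2:] dvd [:2:] * (A * Xp * q)" by (rule dvd_triv_left)
  show ?case unfolding id using d1 d2 d3 by (intro dvd_add)
qed

lemma dvd2_neg: "[:2:] dvd (pcompose f [:0,-1:] - f)" for f :: "int poly"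
  by (subst const_poly_dvd_iff) (auto simp: coeff_pcompose_linear algebra_simps)

lemma dvd_pcompose: "[:c:] dvd p \<Longrightarrow> [:c:] dvd pcompose p q" for p q :: "int poly"
  by (metis dvd_def pcompose_const pcompose_mult)

lemma dvd2_unsq: "[:2:] dvd pcompose d [:0,0,1:] \<Longrightarrow> [:2:] dvd d" for d :: "int poly"
proof -
  assume h: "[:2:] dvd pcompose d [:0,0,1:]"
  show ?thesis
  proof (subst const_poly_dvd_iff, intro allI)
    fix n
    from h have "2 dvd coeff (pcompose d [:0,0,1:]) (2*n)" by (subst (asm) const_poly_dvd_iff) blast
    then show "2 dvd coeff d n" by (simp add: coeff_comp_sq)
  qed
qed


lemma mpi_add: "map_poly (of_int :: int \<Rightarrow> 'a::comm_ring_1) (p + q) = map_poly of_int p + map_poly of_int q"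
  by (rule poly_eqI) (simp add: coeff_map_poly)

lemma mpi_diff: "map_poly (of_int :: int \<Rightarrow> 'a::comm_ring_1) (p - q) = map_poly of_int p - map_poly of_int q"
  by (rule poly_eqI) (simp add: coeff_map_poly)

lemma mpi_mult: "map_poly (of_int :: int \<Rightarrow> 'a::comm_ring_1) (p * q) = map_poly of_int p * map_poly of_int q"
  by (rule poly_eqI) (simp add: coeff_map_poly coeff_mult)

lemma map_poly_pcompose_int:
  "map_poly (of_int :: int \<Rightarrow> 'a::comm_ring_1) (pcompose p q) = pcompose (map_poly of_int p) (map_poly of_int q)"
  by (induction p) (simp_all add: pcompose_pCons map_poly_pCons mpi_add mpi_mult)

definition ofi :: "int fps \<Rightarrow> complex fps" where "ofi f = Abs_fps (\<lambda>n. of_int (f $ n))"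

lemma ofi_mult: "ofi (f * g) = ofi f * ofi g"
  by (rule fps_ext) (simp add: ofi_def fps_mult_nth)

lemma ofi_poly: "ofi (fps_of_poly p) = fps_of_poly (map_poly of_int p)"
  by (rule fps_ext) (simp add: ofi_def coeff_map_poly)

lemma ring_id: "(f + c*h)*(fm + c*hm) - f*fm = c*(h*(fm - f) + f*(hm-h) + 2*(h*f)) + c*c*(h*hm)"
  for f c h fm hm :: "'a::comm_ring_1"
  by (simp add: algebra_simps)

lemma main_cong:
  fixes C \<phi> P :: "int poly"
  assumes CP: "C = pcompose P [:0,0,1:]"
    and Cfac: "C = \<phi> * pcompose \<phi> [:0, -1:]"
  shows "[:4:] dvd P * pcompose P [:0,-1:] - pcompose P [:0,0,1:]"
proof -
  let ?M = "[:0,-1:] :: int poly" and ?Q = "[:0,0,1:] :: int poly"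
  have "pcompose (P - \<phi>) ?Q = \<phi> * (pcompose \<phi> ?M - \<phi>) + (\<phi> * \<phi> - pcompose \<phi> ?Q)"
    using CP Cfac by (simp add: pcompose_diff algebra_simps)
  moreover have "[:2:] dvd \<phi> * (pcompose \<phi> ?M - \<phi>) + (\<phi> * \<phi> - pcompose \<phi> ?Q)"
    using dvd2_neg[of \<phi>] dvd2_sq[of \<phi>] by (intro dvd_add dvd_mult) auto
  ultimately have "[:2:] dvd P - \<phi>" using dvd2_unsq by metis
  then obtain h where h: "P - \<phi> = [:2:] * h" by (auto simp: dvd_def)
  have P: "P = \<phi> + [:2:] * h" using h by (simp add: algebra_simps)
  define E where "E = h * (pcompose \<phi> ?M - \<phi>) + \<phi> * (pcompose h ?M - h) + 2 * (h * \<phi>)"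
  have d2: "[:2:] dvd (2::int poly) * (h * \<phi>)"
    by (simp add: numeral_mult_conv_smult const_poly_dvd_iff)
  have E2: "[:2:] dvd E" unfolding E_def
    by (rule dvd_add[OF dvd_add[OF dvd_mult[OF dvd2_neg[of \<phi>]] dvd_mult[OF dvd2_neg[of h]]] d2])
  have Pm: "pcompose P ?M = pcompose \<phi> ?M + [:2:] * pcompose h ?M"
    by (subst P) (simp only: pcompose_add pcompose_mult pcompose_const)
  have PQ: "pcompose P ?Q = \<phi> * pcompose \<phi> ?M" using CP Cfac by simp
  have "P * pcompose P ?M - pcompose P ?Q = [:2:] * E + ([:2:] * [:2:]) * (h * pcompose h ?M)"
    unfolding E_def Pm PQ by (subst P) (rule ring_id)
  also have "[:2:] * [:2:] = ([:4:] :: int poly)" by simp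
  moreover have "[:4:] dvd [:2:] * E"
  proof -
    have "[:2:] * [:2:] dvd [:2:] * E" using E2 by (rule mult_dvd_mono[OF dvd_refl])
    then show ?thesis by simp
  qed
  ultimately show ?thesis by (metis dvd_add dvd_triv_left)
qed


theorem proposition5p1:
  fixes C \<phi> :: "int poly"
  assumes C0: "coeff C 0 = 1"
    and Ceven: "\<forall>n. odd n \<longrightarrow> coeff C n = 0"
    and Cfac: "C = \<phi> * pcompose \<phi> [:0, -1:]"
  shows "(\<exists>a :: nat \<Rightarrow> int.
            fps_of_poly (conway_triple C) = (Abs_fps (\<lambda>n. of_int (a n)))^2)
       \<and> (\<exists>F :: int poly. (\<forall>n. odd n \<longrightarrow> coeff F n = 0) \<and>
            (\<forall>n. \<exists>k :: int. coeff (map_poly of_int (F^2)) n - coeff (conway_triple C) n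
                              = of_int (4 * k)))"
proof -
  let ?M = "[:0,-1:] :: int poly" and ?Q = "[:0,0,1:] :: int poly"
  define P where "P = Abs_poly (\<lambda>n. coeff C (2*n))"
  have cP: "coeff P = (\<lambda>n. coeff C (2*n))" unfolding P_def
    by (rule coeff_Abs_poly[of "degree C"]) (simp add: coeff_eq_0)
  have CP: "C = pcompose P ?Q"
    by (rule poly_eqI) (use Ceven in \<open>auto simp: coeff_comp_sq cP\<close>)
  define Ci where "Ci = pcompose P [:0,0,-1:]"
  define C2 where "C2 = pcompose C ?Q"
  have G: "[:4:] dvd P * pcompose P ?M - pcompose P ?Q" by (rule main_cong[OF CP Cfac])
  have "pcompose (P * pcompose P ?M - pcompose P ?Q) ?Q = C * Ci - C2"
    by (simp add: pcompose_diff pcompose_mult CP[symmetric] C2_def Ci_def pcompose_assoc[symmetric] pcompose_pCons)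
  then have "[:4:] dvd C * Ci - C2" using dvd_pcompose[OF G] by metis
  then obtain D where D: "C * Ci - C2 = [:4:] * D" by (auto simp: dvd_def)
  have triple: "conway_triple C = map_poly of_int (C * Ci * C2)"
  proof -
    have "pcompose (map_poly of_int C) [:0, \<i>:] = map_poly (of_int :: int \<Rightarrow> complex) Ci"
      unfolding CP Ci_def map_poly_pcompose_int
      by (simp add: pcompose_assoc[symmetric] pcompose_pCons map_poly_pCons)
    moreover have "pcompose (map_poly of_int C) [:0, 0, 1:] = map_poly (of_int :: int \<Rightarrow> complex) C2"
      unfolding C2_def map_poly_pcompose_int by (simp add: map_poly_pCons)
    ultimately show ?thesis unfolding conway_triple_def by (simp add: mpi_mult)
  qed
  have c20: "coeff C2 0 = 1" using C0 by (simp add: C2_def poly_0_coeff_0)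
  have ci0: "coeff Ci 0 = 1" using C0 by (simp add: Ci_def poly_0_coeff_0 cP)
  have "coeff (C * Ci - C2) 0 = 4 * coeff D 0" unfolding D by simp
  then have d0: "coeff D 0 = 0" using C0 c20 ci0 by (simp add: coeff_mult_0)
  have eq: "C * Ci * C2 = C2 * C2 + [:4:] * (C2 * D)"
  proof -
    have "C * Ci = C2 + [:4:] * D" using D by (simp add: algebra_simps)
    then show ?thesis by (simp add: algebra_simps)
  qed
  define X where "X = fps_of_poly C2"
  define Y where "Y = fps_of_poly (C2 * D)"
  have "X $ 0 = 1" "Y $ 0 = 0" using c20 d0 by (simp_all add: X_def Y_def coeff_mult_0)
  then obtain t where t: "X * t + t * t = Y" using sqrt_aux by blast
  define aa where "aa = X + 2 * t"
  have "aa ^ 2 = X * X + 4 * (X * t + t * t)" unfolding aa_def by (simp add: algebra_simps power2_eq_square)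
  also have "\<dots> = X * X + 4 * Y" by (simp only: t)
  also have "\<dots> = fps_of_poly (C * Ci * C2)"
    unfolding eq X_def Y_def by (simp add: fps_of_poly_add fps_of_poly_mult fps_of_poly_const fps_of_poly_smult)
  finally have aa2: "aa ^ 2 = fps_of_poly (C * Ci * C2)" .
  have part1: "fps_of_poly (conway_triple C) = (Abs_fps (\<lambda>n. of_int (aa $ n)))^2"
  proof -
    have "fps_of_poly (conway_triple C) = ofi (aa ^ 2)" unfolding triple aa2 ofi_poly ..
    also have "\<dots> = ofi aa ^ 2" by (simp add: power2_eq_square ofi_mult)
    finally show ?thesis by (simp add: ofi_def)
  qed
  have part2: "\<forall>n. \<exists>k :: int. coeff (map_poly of_int (C2^2)) n - coeff (conway_triple C) n
                              = of_int (4 * k)"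
  proof
    fix n
    show "\<exists>k :: int. coeff (map_poly of_int (C2^2)) n - coeff (conway_triple C) n = of_int (4 * k)"
      by (rule exI[of _ "- coeff (C2 * D) n"])
         (simp add: triple eq coeff_map_poly power2_eq_square)
  qed
  have ev: "\<forall>n. odd n \<longrightarrow> coeff C2 n = 0" by (simp add: C2_def coeff_comp_sq)
  show ?thesis using part1 part2 ev by blast
qed

end
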